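(* If $M$ and $N$ are transversal matroids on disjoint finite sets, then the free product $M\mathbin{\Box} N$ is a transversal matroid.
   Context: For a matroid $M$ on $S$ write $\rho_M$ for rank, $\rho(M)=\rho_M(S)$, $\nu_M(A)=|A|-\rho_M(A)$, $\lambda_M(A)=\rho(M)-\rho_M(A)$. For matroids $M$ on $S$ and $N$ on $T$ with $S\cap T=\emptyset$, the free product $M\mathbin{\Box} N$ is the matroid on $S\cup T$ whose independent sets are those $A$ with $A\cap S$ independent in $M$ and $\lambda_M(A\cap S)\geq\nu_N(A\cap T)$. Given an indexed family $\{A_i: i\in I\}$ of subsets of a set $S$ (repetitions allowed), a partial transversal is a set $A\subseteq S$ admitting an injection $f:A\to I$ with $a\in A_{f(a)}$ for all $a\in A$; a transversal matroid is a matroid whose independent sets are exactly the partial transversals of some such family. *)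

theory Defs
  imports Main
begin

definition matroid :: "'a set \<Rightarrow> ('a set \<Rightarrow> bool) \<Rightarrow> bool" where
  "matroid S indep \<longleftrightarrow>
     finite S \<and>
     (\<forall>X. indep X \<longrightarrow> X \<subseteq> S) \<and>
     indep {} \<and>
     (\<forall>X Y. indep X \<and> Y \<subseteq> X \<longrightarrow> indep Y) \<and>
     (\<forall>X Y. indep X \<and> indep Y \<and> card X < card Y \<longrightarrow> (\<exists>y\<in>Y - X. indep (insert y X)))"

definition mrank :: "('a set \<Rightarrow> bool) \<Rightarrow> 'a set \<Rightarrow> nat" where
  "mrank indep A = Max (card ` {B. B \<subseteq> A \<and> indep B})"

definition mnullity :: "('a set \<Rightarrow> bool) \<Rightarrow> 'a set \<Rightarrow> nat" where
  "mnullity indep A = card A - mrank indep A"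

definition mlambda :: "'a set \<Rightarrow> ('a set \<Rightarrow> bool) \<Rightarrow> 'a set \<Rightarrow> nat" where
  "mlambda S indep A = mrank indep S - mrank indep A"

definition free_product ::
  "'a set \<Rightarrow> ('a set \<Rightarrow> bool) \<Rightarrow> 'a set \<Rightarrow> ('a set \<Rightarrow> bool) \<Rightarrow> 'a set \<Rightarrow> bool" where
  "free_product S indM T indN A \<longleftrightarrow>
     A \<subseteq> S \<union> T \<and> indM (A \<inter> S) \<and> mnullity indN (A \<inter> T) \<le> mlambda S indM (A \<inter> S)"

definition partial_transversal :: "'i set \<Rightarrow> ('i \<Rightarrow> 'a set) \<Rightarrow> 'a set \<Rightarrow> bool" where
  "partial_transversal I F A \<longleftrightarrow>
     (\<exists>f. inj_on f A \<and> f ` A \<subseteq> I \<and> (\<forall>a\<in>A. a \<in> F (f a)))"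

definition transversal_matroid :: "'a set \<Rightarrow> ('a set \<Rightarrow> bool) \<Rightarrow> bool" where
  "transversal_matroid S indep \<longleftrightarrow>
     matroid S indep \<and>
     (\<exists>(I::nat set) F. (\<forall>i\<in>I. F i \<subseteq> S) \<and>
        (\<forall>A. indep A \<longleftrightarrow> A \<subseteq> S \<and> partial_transversal I F A))"

end

theory Submission
  imports Defs
begin

definition valid :: "'i set \<Rightarrow> ('i \<Rightarrow> 'a set) \<Rightarrow> 'a set \<Rightarrow> ('a \<Rightarrow> 'i) \<Rightarrow> bool" where
  "valid I F X f \<longleftrightarrow> inj_on f X \<and> f ` X \<subseteq> I \<and> (\<forall>a\<in>X. a \<in> F (f a))"

lemma pt_valid: "partial_transversal I F X \<longleftrightarrow> (\<exists>f. valid I F X f)"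
  unfolding partial_transversal_def valid_def by blast

lemma valid_insert:
  assumes "valid I F X f" "j \<notin> f ` X" "j \<in> I" "y \<in> F j" "y \<notin> X"
  shows "valid I F (insert y X) (f(y := j))"
proof -
  have "inj_on (f(y := j)) X" using assms(1) unfolding valid_def
    by (metis assms(5) fun_upd_other inj_on_cong)
  moreover have "(f(y := j)) ` X = f ` X" using assms(5) by auto
  ultimately show ?thesis using assms unfolding valid_def by auto
qed

lemma key:
  assumes "finite X" "valid I F X f" "valid I F Y \<psi>"
  shows "\<exists>\<phi>. valid I F X \<phi> \<and> (\<forall>y\<in>X\<inter>Y. \<psi> y \<in> \<phi> ` X)"
proof -
  let ?ag = "\<lambda>\<phi>. card {z\<in>X\<inter>Y. \<phi> z = \<psi> z}"
  let ?P = "\<lambda>n. \<exists>\<phi>. valid I F X \<phi> \<and> n = ?ag \<phi>"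
  have "?P (?ag f)" using assms by blast
  moreover have "\<forall>n. ?P n \<longrightarrow> n \<le> card X"
  proof (intro allI impI)
    fix n assume "?P n"
    then obtain \<phi> where "n = ?ag \<phi>" by blast
    moreover have "?ag \<phi> \<le> card X" by (rule card_mono[OF assms(1)]) blast
    ultimately show "n \<le> card X" by simp
  qed
  ultimately have "\<exists>n. ?P n \<and> (\<forall>m. ?P m \<longrightarrow> m \<le> n)"
    by (rule Nat.ex_has_greatest_nat[of ?P "?ag f" "card X"])
  then obtain n where n: "?P n" "\<forall>m. ?P m \<longrightarrow> m \<le> n" by blast
  then obtain \<phi> where phi: "valid I F X \<phi>" "n = ?ag \<phi>" by blast
  have "\<psi> y \<in> \<phi> ` X" if y: "y \<in> X" "y \<in> Y" for y
  proof (rule ccontr)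
    assume nin: "\<psi> y \<notin> \<phi> ` X"
    let ?\<phi> = "\<phi>(y := \<psi> y)"
    have "valid I F (insert y (X - {y})) ?\<phi>"
    proof (rule valid_insert)
      show "valid I F (X - {y}) \<phi>" using phi(1) unfolding valid_def by (auto intro: inj_on_subset)
      show "\<psi> y \<notin> \<phi> ` (X - {y})" using nin by auto
      show "\<psi> y \<in> I" "y \<in> F (\<psi> y)" using assms(3) y unfolding valid_def by auto
    qed auto
    then have v: "valid I F X ?\<phi>" using y by (simp add: insert_absorb)
    have ne: "\<phi> y \<noteq> \<psi> y" using nin y by (metis imageI)
    have "{z\<in>X\<inter>Y. ?\<phi> z = \<psi> z} = insert y {z\<in>X\<inter>Y. \<phi> z = \<psi> z}"
      using y by auto
    moreover have "y \<notin> {z\<in>X\<inter>Y. \<phi> z = \<psi> z}" using ne by auto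
    moreover have "finite {z\<in>X\<inter>Y. \<phi> z = \<psi> z}" using assms(1) by simp
    ultimately have "?ag ?\<phi> = Suc n" using phi(2) by simp
    then have "?P (Suc n)" using v by (intro exI[of _ ?\<phi>]) simp
    then have "Suc n \<le> n" using n(2) by blast
    then show False by simp
  qed
  then show ?thesis using phi by blast
qed

lemma augment:
  assumes fY: "finite Y" and fX: "finite X" and "valid I F X f" "valid I F Y \<psi>" "card X < card Y"
  shows "\<exists>y\<in>Y - X. partial_transversal I F (insert y X)"
proof -
  obtain \<phi> where phi: "valid I F X \<phi>" "\<forall>y\<in>X\<inter>Y. \<psi> y \<in> \<phi> ` X"
    using key[OF fX assms(3,4)] by blast
  have c1: "card (\<phi> ` X) = card X" using phi(1) card_image unfolding valid_def by blast
  have c2: "card (\<psi> ` Y) = card Y" using assms(4) card_image unfolding valid_def by blast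
  have "\<not> \<psi> ` Y \<subseteq> \<phi> ` X"
  proof
    assume "\<psi> ` Y \<subseteq> \<phi> ` X"
    then have "card (\<psi> ` Y) \<le> card (\<phi> ` X)" using fX by (intro card_mono) auto
    then show False using c1 c2 assms(5) by simp
  qed
  then obtain y where y: "y \<in> Y" "\<psi> y \<notin> \<phi> ` X" by blast
  then have yX: "y \<notin> X" using phi(2) by blast
  have "valid I F (insert y X) (\<phi>(y := \<psi> y))"
    by (rule valid_insert) (use phi y yX assms(4) in \<open>auto simp: valid_def\<close>)
  then show ?thesis using y yX pt_valid by blast
qed

lemma pt_matroid:
  assumes "finite E" "\<forall>i\<in>I. F i \<subseteq> E"
  shows "matroid E (\<lambda>A. A \<subseteq> E \<and> partial_transversal I F A)"
proof -
  have 1: "partial_transversal I F {}" by (simp add: partial_transversal_def)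
  have 2: "partial_transversal I F Y" if "partial_transversal I F X" "Y \<subseteq> X" for X Y
    using that unfolding partial_transversal_def by (meson dual_order.trans image_mono inj_on_subset subset_iff)
  have 3: "\<exists>y\<in>Y - X. insert y X \<subseteq> E \<and> partial_transversal I F (insert y X)"
    if a: "X \<subseteq> E" "partial_transversal I F X" "Y \<subseteq> E" "partial_transversal I F Y" "card X < card Y" for X Y
  proof -
    obtain f \<psi> where "valid I F X f" "valid I F Y \<psi>" using a pt_valid by metis
    then obtain y where "y \<in> Y - X" "partial_transversal I F (insert y X)"
      using augment[of Y X I F f \<psi>] a assms(1) finite_subset by blast
    then show ?thesis using a by blast
  qed
  show ?thesis unfolding matroid_def
    apply (intro conjI allI impI)
    using assms(1) 1 2 3 by force+
qed

lemma matroid_sub: "matroid E ind \<Longrightarrow> ind X \<Longrightarrow> X \<subseteq> E"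
  unfolding matroid_def by blast

lemma matroid_fin: "matroid E ind \<Longrightarrow> finite E"
  unfolding matroid_def by blast

lemma mrank_fin:
  assumes "matroid E ind" shows "finite {B. B \<subseteq> A \<and> ind B}"
proof -
  have "{B. B \<subseteq> A \<and> ind B} \<subseteq> Pow E" using matroid_sub[OF assms] by blast
  moreover have "finite (Pow E)" using matroid_fin[OF assms] by simp
  ultimately show ?thesis by (rule finite_subset)
qed

lemma mrank_ge:
  assumes "matroid E ind" "B \<subseteq> A" "ind B" shows "card B \<le> mrank ind A"
proof -
  have "card B \<in> card ` {B. B \<subseteq> A \<and> ind B}" using assms(2,3) by blast
  then show ?thesis unfolding mrank_def using mrank_fin[OF assms(1), of A] by (intro Max_ge) auto
qed

lemma mrank_obtain:
  assumes "matroid E ind" shows "\<exists>B. B \<subseteq> A \<and> ind B \<and> card B = mrank ind A"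
proof -
  have "ind {}" using assms unfolding matroid_def by blast
  then have "card ` {B. B \<subseteq> A \<and> ind B} \<noteq> {}" by blast
  then have "mrank ind A \<in> card ` {B. B \<subseteq> A \<and> ind B}"
    unfolding mrank_def using mrank_fin[OF assms, of A] by (intro Max_in) auto
  then show ?thesis by auto
qed

lemma mrank_indep:
  assumes "matroid E ind" "ind A" shows "mrank ind A = card A"
proof -
  have fA: "finite A" using matroid_sub[OF assms] matroid_fin[OF assms(1)] by (rule finite_subset)
  obtain B where B: "B \<subseteq> A" "card B = mrank ind A" using mrank_obtain[OF assms(1)] by blast
  have "card B \<le> card A" using fA B(1) by (rule card_mono)
  then have "mrank ind A \<le> card A" using B(2) by simp
  moreover have "card A \<le> mrank ind A" using mrank_ge[OF assms(1) order_refl assms(2)] .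
  ultimately show ?thesis by simp
qed

lemma matroid_aug: "matroid E ind \<Longrightarrow> ind X \<Longrightarrow> ind Y \<Longrightarrow> card X < card Y \<Longrightarrow> \<exists>y\<in>Y - X. ind (insert y X)"
  unfolding matroid_def by blast

lemma r_pres:
  assumes fE: "finite E" and FE: "\<forall>i\<in>I. F i \<subseteq> E"
    and ind: "ind = (\<lambda>A. A \<subseteq> E \<and> partial_transversal I F A)"
  shows "\<exists>J \<subseteq> I. finite J \<and> card J = mrank ind E \<and> (\<forall>X. ind X \<longrightarrow> partial_transversal J F X)"
proof -
  have indD: "ind X \<longleftrightarrow> X \<subseteq> E \<and> (\<exists>f. valid I F X f)" for X unfolding ind pt_valid by simp
  have M: "matroid E ind" using pt_matroid[OF fE FE] ind by simp
  obtain B where B: "B \<subseteq> E" "ind B" "card B = mrank ind E" using mrank_obtain[OF M] by blast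
  obtain \<psi> where psi: "valid I F B \<psi>" using B(2) indD by blast
  define J where "J = \<psi> ` B"
  have fB: "finite B" using fE B(1) by (rule finite_subset[rotated])
  have "card J = card B" unfolding J_def using psi unfolding valid_def by (intro card_image) blast
  then have cJ: "card J = mrank ind E" using B(3) by simp
  have JI: "J \<subseteq> I" using psi unfolding J_def valid_def by blast
  have fJ: "finite J" unfolding J_def using fB by simp
  have "partial_transversal J F X" if X: "ind X" for X
  proof -
    let ?P = "\<lambda>n. \<exists>Z. X \<subseteq> Z \<and> ind Z \<and> n = card Z"
    have P0: "?P (card X)" using X by blast
    have bd: "\<forall>n. ?P n \<longrightarrow> n \<le> mrank ind E"
    proof (intro allI impI)
      fix n assume "?P n"
      then obtain Z where Z: "ind Z" "n = card Z" by blast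
      then show "n \<le> mrank ind E" using mrank_ge[OF M matroid_sub[OF M Z(1)] Z(1)] by simp
    qed
    have "\<exists>n. ?P n \<and> (\<forall>m. ?P m \<longrightarrow> m \<le> n)"
      by (rule Nat.ex_has_greatest_nat[of ?P "card X" "mrank ind E", OF P0 bd])
    then obtain n where n: "?P n" "\<forall>m. ?P m \<longrightarrow> m \<le> n" by blast
    then obtain B' where B': "X \<subseteq> B'" "ind B'" "n = card B'" by blast
    have B'E: "B' \<subseteq> E" using matroid_sub[OF M B'(2)] .
    have fB': "finite B'" using fE B'E by (rule finite_subset[rotated])
    have le: "card B' \<le> mrank ind E" using mrank_ge[OF M B'E B'(2)] .
    have cB': "card B' = mrank ind E"
    proof (rule ccontr)
      assume "card B' \<noteq> mrank ind E"
      then have "card B' < card B" using B(3) le by simp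
      then obtain y where y: "y \<in> B - B'" "ind (insert y B')"
        using matroid_aug[OF M B'(2) B(2)] by blast
      have "card (insert y B') = Suc n" using y(1) fB' B'(3) by simp
      then have "?P (Suc n)" using y(2) B'(1) by (intro exI[of _ "insert y B'"]) auto
      then have "Suc n \<le> n" using n(2) by blast
      then show False by simp
    qed
    obtain f where f: "valid I F B' f" using B'(2) indD by blast
    obtain \<phi> where phi: "valid I F B' \<phi>" "\<forall>y\<in>B'\<inter>B. \<psi> y \<in> \<phi> ` B'"
      using key[OF fB' f psi] by blast
    have "J \<subseteq> \<phi> ` B'"
    proof
      fix j assume "j \<in> J"
      then obtain y where y: "y \<in> B" "j = \<psi> y" unfolding J_def by blast
      show "j \<in> \<phi> ` B'"
      proof (rule ccontr)
        assume nj: "j \<notin> \<phi> ` B'"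
        then have yB': "y \<notin> B'" using phi(2) y by blast
        have "valid I F (insert y B') (\<phi>(y := j))"
          by (rule valid_insert) (use phi nj y yB' psi in \<open>auto simp: valid_def\<close>)
        moreover have "insert y B' \<subseteq> E" using B'E y(1) B(1) by blast
        ultimately have "ind (insert y B')" using indD by blast
        then have "card (insert y B') \<le> mrank ind E" using mrank_ge[OF M matroid_sub[OF M]] by blast
        then show False using cB' fB' yB' by simp
      qed
    qed
    moreover have "card (\<phi> ` B') = card J"
    proof -
      have "card (\<phi> ` B') = card B'" using phi(1) unfolding valid_def by (intro card_image) blast
      then show ?thesis using cB' cJ by simp
    qed
    moreover have "finite (\<phi> ` B')" using fB' by simp
    ultimately have "J = \<phi> ` B'" using card_subset_eq[of "\<phi> ` B'" J] by simp
    then have "valid J F X \<phi>" using phi(1) B'(1) unfolding valid_def by (auto intro: inj_on_subset)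
    then show ?thesis using pt_valid by blast
  qed
  then show ?thesis using JI fJ cJ by blast
qed

theorem proposition4p13:
  fixes S T :: "'a set" and indM indN :: "'a set \<Rightarrow> bool"
  assumes "finite S" and "finite T" and "S \<inter> T = {}"
    and "matroid S indM" and "matroid T indN"
    and "transversal_matroid S indM" and "transversal_matroid T indN"
  shows "transversal_matroid (S \<union> T) (free_product S indM T indN)"
proof -
  note fS = assms(1) and fT = assms(2) and disj = assms(3) and MM = assms(4) and MN = assms(5)
  obtain I1 :: "nat set" and F1 where F1S: "\<forall>i\<in>I1. F1 i \<subseteq> S"
    and indM: "\<forall>A. indM A \<longleftrightarrow> A \<subseteq> S \<and> partial_transversal I1 F1 A"
    using assms(6) unfolding transversal_matroid_def by blast
  obtain I2 :: "nat set" and F2 where F2T: "\<forall>i\<in>I2. F2 i \<subseteq> T"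
    and indN: "\<forall>A. indN A \<longleftrightarrow> A \<subseteq> T \<and> partial_transversal I2 F2 A"
    using assms(7) unfolding transversal_matroid_def by blast
  have indM': "indM = (\<lambda>A. A \<subseteq> S \<and> partial_transversal I1 F1 A)" by (rule ext) (simp add: indM)
  obtain J where J: "J \<subseteq> I1" "finite J" "card J = mrank indM S"
    "\<forall>X. indM X \<longrightarrow> partial_transversal J F1 X"
    using r_pres[OF fS F1S indM'] by blast
  define K where "K = (\<lambda>i. 2*i) ` J \<union> (\<lambda>i. 2*i+1) ` I2"
  define H where "H = (\<lambda>k::nat. if even k then F1 (k div 2) \<union> T else F2 (k div 2))"
  have F1J: "\<forall>i\<in>J. F1 i \<subseteq> S" using F1S J(1) by blast
  have HK: "\<forall>k\<in>K. H k \<subseteq> S \<union> T" using F1J F2T unfolding K_def H_def by fastforce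
  have eq: "free_product S indM T indN A \<longleftrightarrow> A \<subseteq> S \<union> T \<and> partial_transversal K H A" for A
  proof
    assume fp: "free_product S indM T indN A"
    then have AST: "A \<subseteq> S \<union> T" and iS: "indM (A \<inter> S)"
      and nl: "mnullity indN (A \<inter> T) \<le> mlambda S indM (A \<inter> S)"
      unfolding free_product_def by auto
    obtain \<phi> where phi: "valid J F1 (A \<inter> S) \<phi>" using J(4) iS pt_valid by metis
    obtain P where P: "P \<subseteq> A \<inter> T" "indN P" "card P = mrank indN (A \<inter> T)"
      using mrank_obtain[OF MN] by blast
    obtain \<chi> where chi: "valid I2 F2 P \<chi>" using P(2) indN pt_valid by metis
    define R where "R = A \<inter> T - P"
    have fA: "finite A" using AST fS fT finite_subset by blast
    have fAT: "finite (A \<inter> T)" using fT by simp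
    have cR: "card R = mnullity indN (A \<inter> T)"
    proof -
      have "finite P" by (rule finite_subset[OF P(1) fAT])
      then have "card (A \<inter> T - P) = card (A \<inter> T) - card P" using P(1) by (rule card_Diff_subset)
      then show ?thesis unfolding R_def mnullity_def using P(3) by simp
    qed
    have cphi: "card (\<phi> ` (A \<inter> S)) = card (A \<inter> S)" using phi card_image unfolding valid_def by blast
    have phiJ: "\<phi> ` (A \<inter> S) \<subseteq> J" using phi unfolding valid_def by blast
    have "mlambda S indM (A \<inter> S) = card J - card (A \<inter> S)"
      unfolding mlambda_def using J(3) mrank_indep[OF MM iS] by simp
    also have "\<dots> = card (J - \<phi> ` (A \<inter> S))" using cphi phiJ J(2)
      by (simp add: card_Diff_subset finite_subset)
    finally have "card R \<le> card (J - \<phi> ` (A \<inter> S))" using cR nl by simp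
    moreover have "finite R" unfolding R_def using fAT by simp
    ultimately obtain g where g: "g ` R \<subseteq> J - \<phi> ` (A \<inter> S)" "inj_on g R"
      using card_le_inj[of R "J - \<phi> ` (A \<inter> S)"] J(2) by blast
    define h where "h = (\<lambda>a. if a \<in> S then 2 * \<phi> a else if a \<in> P then 2 * \<chi> a + 1 else 2 * g a)"
    have "valid K H A h"
      unfolding valid_def
    proof (intro conjI ballI)
      show "h ` A \<subseteq> K"
      proof
        fix k assume "k \<in> h ` A"
        then obtain a where a: "a \<in> A" "k = h a" by blast
        show "k \<in> K"
        proof (cases "a \<in> S")
          case True then show ?thesis using a phiJ unfolding h_def K_def by auto
        next
          case False
          show ?thesis
          proof (cases "a \<in> P")
            case True then show ?thesis using a False chi unfolding h_def K_def valid_def by auto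
          next
            case nP: False
            then have "a \<in> R" using a False AST unfolding R_def by auto
            then show ?thesis using a False nP g unfolding h_def K_def by auto
          qed
        qed
      qed
    next
      fix a assume a: "a \<in> A"
      show "a \<in> H (h a)"
      proof (cases "a \<in> S")
        case True then show ?thesis using a phi unfolding h_def H_def valid_def by auto
      next
        case False
        show ?thesis
        proof (cases "a \<in> P")
          case True then show ?thesis using a False chi unfolding h_def H_def valid_def by auto
        next
          case nP: False
          then have "a \<in> T" using a False AST by auto
          then show ?thesis using False nP unfolding h_def H_def by auto
        qed
      qed
    next
      show "inj_on h A"
      proof (rule inj_onI)
        fix a b assume a: "a \<in> A" and b: "b \<in> A" and hab: "h a = h b"
        have Ra: "a \<notin> S \<Longrightarrow> a \<notin> P \<Longrightarrow> a \<in> R" using a AST unfolding R_def by auto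
        have Rb: "b \<notin> S \<Longrightarrow> b \<notin> P \<Longrightarrow> b \<in> R" using b AST unfolding R_def by auto
        have PS: "P \<inter> S = {}" using P(1) disj by auto
        have odd: "(2::nat) * x \<noteq> 2 * y + 1" for x y by presburger
        have gnphi: "x \<in> R \<Longrightarrow> y \<in> A \<inter> S \<Longrightarrow> g x \<noteq> \<phi> y" for x y using g by blast
        have iphi: "inj_on \<phi> (A \<inter> S)" and ichi: "inj_on \<chi> P" using phi chi unfolding valid_def by auto
        consider "a \<in> S" | "a \<notin> S" "a \<in> P" | "a \<notin> S" "a \<notin> P" by blast
        then show "a = b"
        proof cases
          case 1
          then have ha: "h a = 2 * \<phi> a" unfolding h_def by simp
          consider "b \<in> S" | "b \<notin> S" "b \<in> P" | "b \<notin> S" "b \<notin> P" by blast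
          then show ?thesis
          proof cases
            case 1
            then have "\<phi> a = \<phi> b" using ha hab unfolding h_def by simp
            then show ?thesis using iphi a b 1 \<open>a \<in> S\<close> unfolding inj_on_def by blast
          next
            case 2 then have "h b = 2 * \<chi> b + 1" unfolding h_def by simp
            then show ?thesis using ha hab by presburger
          next
            case 3
            then have "g b = \<phi> a" using ha hab unfolding h_def by simp
            then show ?thesis using gnphi[OF Rb[OF 3]] a \<open>a \<in> S\<close> by blast
          qed
        next
          case 2
          then have ha: "h a = 2 * \<chi> a + 1" unfolding h_def by simp
          consider "b \<in> S" | "b \<notin> S" "b \<in> P" | "b \<notin> S" "b \<notin> P" by blast
          then show ?thesis
          proof cases
            case 1 then have "h b = 2 * \<phi> b" unfolding h_def by simp
            then show ?thesis using ha hab by presburger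
          next
            case 2
            then have "\<chi> a = \<chi> b" using ha hab unfolding h_def by simp
            then show ?thesis using ichi 2 \<open>a \<in> P\<close> unfolding inj_on_def by blast
          next
            case 3 then have "h b = 2 * g b" unfolding h_def by simp
            then show ?thesis using ha hab by presburger
          qed
        next
          case 3
          then have ha: "h a = 2 * g a" unfolding h_def by simp
          have aR: "a \<in> R" using Ra 3 by blast
          consider "b \<in> S" | "b \<notin> S" "b \<in> P" | "b \<notin> S" "b \<notin> P" by blast
          then show ?thesis
          proof cases
            case 1
            then have "g a = \<phi> b" using ha hab unfolding h_def by simp
            then show ?thesis using gnphi[OF aR] b 1 by blast
          next
            case 2 then have "h b = 2 * \<chi> b + 1" unfolding h_def by simp
            then show ?thesis using ha hab by presburger
          next
            case 3
            then have "g a = g b" using ha hab unfolding h_def by simp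
            then show ?thesis using g(2) aR Rb[OF 3] unfolding inj_on_def by blast
          qed
        qed
      qed
    qed
    then show "A \<subseteq> S \<union> T \<and> partial_transversal K H A" using AST pt_valid by blast
  next
    assume "A \<subseteq> S \<union> T \<and> partial_transversal K H A"
    then obtain h where AST: "A \<subseteq> S \<union> T" and h: "valid K H A h" using pt_valid by metis
    have fA: "finite A" using AST fS fT finite_subset by blast
    have ev: "\<exists>i\<in>J. h a = 2 * i" if "a \<in> A" "a \<in> S" for a
    proof -
      have "h a \<in> K" "a \<in> H (h a)" using h that unfolding valid_def by auto
      then show ?thesis using that disj F2T unfolding K_def H_def by (auto; blast)
    qed
    have inS: "a \<in> F1 (h a div 2)" if "a \<in> A" "a \<in> S" for a
    proof -
      have "a \<in> H (h a)" using h that unfolding valid_def by auto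
      then show ?thesis using ev[OF that] that disj unfolding H_def by auto
    qed
    have hinj: "inj_on h A" using h unfolding valid_def by blast
    have "valid I1 F1 (A \<inter> S) (\<lambda>a. h a div 2)"
      unfolding valid_def
    proof (intro conjI ballI)
      show "inj_on (\<lambda>a. h a div 2) (A \<inter> S)"
      proof (rule inj_onI)
        fix a b assume "a \<in> A \<inter> S" "b \<in> A \<inter> S" "h a div 2 = h b div 2"
        then show "a = b" using ev hinj unfolding inj_on_def by (metis IntD1 IntD2 nonzero_mult_div_cancel_left zero_neq_numeral)
      qed
      show "(\<lambda>a. h a div 2) ` (A \<inter> S) \<subseteq> I1" using ev J(1) by fastforce
    qed (use inS in auto)
    then have iS: "indM (A \<inter> S)" using indM pt_valid by blast
    define P where "P = {a \<in> A \<inter> T. odd (h a)}"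
    define Q where "Q = {a \<in> A \<inter> T. even (h a)}"
    have od: "\<exists>i\<in>I2. h a = 2 * i + 1" if "a \<in> P" for a
      using that h unfolding P_def valid_def K_def by auto
    have "valid I2 F2 P (\<lambda>a. h a div 2)"
      unfolding valid_def
    proof (intro conjI ballI)
      show "inj_on (\<lambda>a. h a div 2) P"
      proof (rule inj_onI)
        fix a b assume ab: "a \<in> P" "b \<in> P" "h a div 2 = h b div 2"
        obtain i where i: "h a = 2 * i + 1" using od ab(1) by blast
        obtain i' where i': "h b = 2 * i' + 1" using od ab(2) by blast
        have "h a = h b" using ab(3) i i' by simp
        then show "a = b" using ab hinj unfolding inj_on_def P_def by blast
      qed
      show "(\<lambda>a. h a div 2) ` P \<subseteq> I2" using od by fastforce
      fix a assume a: "a \<in> P"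
      then have "a \<in> H (h a)" using h unfolding valid_def P_def by auto
      then show "a \<in> F2 (h a div 2)" using a unfolding H_def P_def by auto
    qed
    then have iP: "indN P" using indN pt_valid unfolding P_def by blast
    have rP: "card P \<le> mrank indN (A \<inter> T)" using mrank_ge[OF MN _ iP] unfolding P_def by auto
    have fAT: "finite (A \<inter> T)" using fT by simp
    have cAT: "card (A \<inter> T) = card P + card Q"
    proof -
      have "A \<inter> T = P \<union> Q" "P \<inter> Q = {}" unfolding P_def Q_def by auto
      then show ?thesis using fAT by (metis card_Un_disjoint finite_Un)
    qed
    have evQ: "\<exists>i\<in>J. h a = 2 * i" if "a \<in> Q" for a
      using that h unfolding Q_def valid_def K_def by auto
    have "h ` ((A \<inter> S) \<union> Q) \<subseteq> (\<lambda>i. 2*i) ` J" using ev evQ by fastforce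
    moreover have "inj_on h ((A \<inter> S) \<union> Q)" using hinj unfolding Q_def by (rule inj_on_subset) auto
    ultimately have "card ((A \<inter> S) \<union> Q) \<le> card J"
      by (metis J(2) card_image card_image_le card_mono finite_imageI le_trans)
    moreover have "card ((A \<inter> S) \<union> Q) = card (A \<inter> S) + card Q"
      using disj fA unfolding Q_def by (intro card_Un_disjoint) auto
    ultimately have "card Q \<le> mrank indM S - mrank indM (A \<inter> S)"
      using J(3) mrank_indep[OF MM iS] by simp
    then have "mnullity indN (A \<inter> T) \<le> mlambda S indM (A \<inter> S)"
      unfolding mnullity_def mlambda_def using cAT rP by simp
    then show "free_product S indM T indN A" unfolding free_product_def using AST iS by blast
  qed
  have fp: "free_product S indM T indN = (\<lambda>A. A \<subseteq> S \<union> T \<and> partial_transversal K H A)"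
    by (rule ext) (rule eq)
  have m: "matroid (S \<union> T) (\<lambda>A. A \<subseteq> S \<union> T \<and> partial_transversal K H A)"
    using pt_matroid[OF _ HK] fS fT by simp
  show ?thesis unfolding transversal_matroid_def fp
    apply (rule conjI)
     apply (rule m)
    apply (rule exI[of _ K])
    apply (rule exI[of _ H])
    using HK by simp
qed

end
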